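(* Let $\eta\in\mathbb{R}$, $h>0$, $x_0\in\mathbb{R}$, and let $(\Delta W_n)_{n\ge0}$ be i.i.d. $\mathcal{N}(0,h)$ random variables. Define the Milstein iterates for the SDE $\mathrm{d}x_t=-x_t\,\mathrm{d}t+(1+\eta x_t)\,\mathrm{d}W_t$ by $$x_{n+1}=(1-h)x_n+(1+\eta x_n)\Delta W_n+\tfrac12\eta(1+\eta x_n)\big(\Delta W_n^2-h\big),$$ starting from the deterministic value $x_0$, and let $\mu^{(1)}_n=\mathbb{E}[x_n]$, $\mu^{(2)}_n=\mathbb{E}[x_n^2]$. Then $\mu^{(1)}_{n+1}=(1-h)\mu^{(1)}_n$ (so $\mu^{(1)}_n\to0$ for every $x_0$ if and only if $0<h<2$), $$\mu^{(2)}_{n+1}=\Big(1-(2-\eta^2)h+\big(1+\tfrac12\eta^4\big)h^2\Big)\mu^{(2)}_n+\big(h+\tfrac12h^2\eta^2\big)\big(1+2\eta\mu^{(1)}_n\big),$$ and if $0<h<\dfrac{2-\eta^2}{1+\frac12\eta^4}$ then $$\mu^{(2)}_n\to\frac{1+\frac12h\eta^2}{2-\eta^2-h\big(1+\frac12\eta^4\big)}\quad(n\to\infty),$$ which equals $\frac{1}{2-\eta^2}+O(h)$ as $h\to0$ for fixed $\eta$ with $\eta^2<2$.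
   Context: Here $\Delta W_n$ is independent of $x_0,\dots,x_n$. *)

theory Defs
  imports "HOL-Probability.Probability" "HOL-Library.Landau_Symbols"
begin

fun milstein :: "real \<Rightarrow> real \<Rightarrow> real \<Rightarrow> (nat \<Rightarrow> 'a \<Rightarrow> real) \<Rightarrow> nat \<Rightarrow> 'a \<Rightarrow> real" where
  "milstein eta h x0 dW 0 \<omega> = x0"
| "milstein eta h x0 dW (Suc n) \<omega> =
     (let x = milstein eta h x0 dW n \<omega>; d = dW n \<omega>
      in (1 - h) * x + (1 + eta * x) * d + 1/2 * eta * (1 + eta * x) * (d\<^sup>2 - h))"

end

theory Submission
  imports Defs
begin

definition phi :: "real \<Rightarrow> real \<Rightarrow> real \<Rightarrow> nat \<Rightarrow> (nat \<Rightarrow> real) \<Rightarrow> real" where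
  "phi eta h x0 n f = milstein eta h x0 (\<lambda>i (_::unit). f i) n ()"

lemma phi_Suc: "phi eta h x0 (Suc n) f =
  (1 - h) * phi eta h x0 n f + (1 + eta * phi eta h x0 n f) * f n
   + 1/2 * eta * (1 + eta * phi eta h x0 n f) * ((f n)\<^sup>2 - h)"
  by (simp add: phi_def Let_def)

lemma milstein_phi: "(\<And>i. i < n \<Longrightarrow> f i = dW i \<omega>) \<Longrightarrow> milstein eta h x0 dW n \<omega> = phi eta h x0 n f"
proof (induction n)
  case 0 then show ?case by (simp add: phi_def)
next
  case (Suc n)
  then have "milstein eta h x0 dW n \<omega> = phi eta h x0 n f" by simp
  then show ?case using Suc.prems[of n] by (simp add: phi_Suc Let_def)
qed

lemma phi_meas: "n \<le> m \<Longrightarrow> phi eta h x0 n \<in> borel_measurable (PiM {..<m} (\<lambda>_. borel))"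
proof (induction n)
  case 0 then show ?case by (simp add: phi_def)
next
  case (Suc n)
  then have IH[measurable]: "phi eta h x0 n \<in> borel_measurable (PiM {..<m} (\<lambda>_. borel))" by simp
  have [measurable]: "(\<lambda>f. f n) \<in> borel_measurable (PiM {..<m} (\<lambda>_. borel))"
    using Suc.prems by (intro measurable_component_singleton) auto
  show ?case unfolding phi_Suc[abs_def] by measurable
qed

lemma (in prob_space) key:
  fixes dW :: "nat \<Rightarrow> 'a \<Rightarrow> real" and G :: "real \<Rightarrow> real"
  assumes ind: "indep_vars (\<lambda>_. borel) dW UNIV"
    and G[measurable]: "G \<in> borel_measurable borel"
    and i1: "integrable M (\<lambda>\<omega>. (milstein eta h x0 dW n \<omega>) ^ i)"
    and i2: "integrable M (\<lambda>\<omega>. G (dW n \<omega>))"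
  shows "integrable M (\<lambda>\<omega>. (milstein eta h x0 dW n \<omega>) ^ i * G (dW n \<omega>))"
    "(\<integral>\<omega>. (milstein eta h x0 dW n \<omega>) ^ i * G (dW n \<omega>) \<partial>M)
      = (\<integral>\<omega>. (milstein eta h x0 dW n \<omega>) ^ i \<partial>M) * (\<integral>\<omega>. G (dW n \<omega>) \<partial>M)"
proof -
  have iv: "indep_var (PiM {..<n} (\<lambda>_. borel)) (\<lambda>\<omega>. restrict (\<lambda>i. dW i \<omega>) {..<n})
     (PiM {n} (\<lambda>_. borel)) (\<lambda>\<omega>. restrict (\<lambda>i. dW i \<omega>) {n})"
    by (rule indep_var_restrict[OF ind]) auto
  have m1: "(\<lambda>f. phi eta h x0 n f ^ i) \<in> borel_measurable (PiM {..<n} (\<lambda>_. borel))"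
    using phi_meas[of n n eta h x0] by measurable
  have [measurable]: "(\<lambda>f. f n) \<in> borel_measurable (PiM {n} (\<lambda>_. borel))"
    by (intro measurable_component_singleton) auto
  have m2: "(\<lambda>f. G (f n)) \<in> borel_measurable (PiM {n} (\<lambda>_. borel))"
    by measurable
  note iv2 = indep_var_compose[OF iv m1 m2]
  have e1: "(\<lambda>f. phi eta h x0 n f ^ i) \<circ> (\<lambda>\<omega>. restrict (\<lambda>i. dW i \<omega>) {..<n})
      = (\<lambda>\<omega>. (milstein eta h x0 dW n \<omega>) ^ i)"
    by (rule ext) (simp add: milstein_phi[of n "restrict (\<lambda>i. dW i _) {..<n}"])
  have e2: "(\<lambda>f. G (f n)) \<circ> (\<lambda>\<omega>. restrict (\<lambda>i. dW i \<omega>) {n}) = (\<lambda>\<omega>. G (dW n \<omega>))"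
    by (rule ext) simp
  have iv3: "indep_var borel (\<lambda>\<omega>. (milstein eta h x0 dW n \<omega>) ^ i) borel (\<lambda>\<omega>. G (dW n \<omega>))"
    using iv2 unfolding e1 e2 .
  show "integrable M (\<lambda>\<omega>. (milstein eta h x0 dW n \<omega>) ^ i * G (dW n \<omega>))"
    by (rule indep_var_integrable[OF iv3 i1 i2])
  show "(\<integral>\<omega>. (milstein eta h x0 dW n \<omega>) ^ i * G (dW n \<omega>) \<partial>M)
      = (\<integral>\<omega>. (milstein eta h x0 dW n \<omega>) ^ i \<partial>M) * (\<integral>\<omega>. G (dW n \<omega>) \<partial>M)"
    by (rule indep_var_lebesgue_integral[OF iv3 i1 i2])
qed


lemma (in prob_space) normal_moms:
  fixes X :: "'a \<Rightarrow> real"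
  assumes D: "distributed M lborel X (normal_density 0 (sqrt h))" and h: "h > 0"
  shows "integrable M (\<lambda>\<omega>. X \<omega> ^ k)"
    "(\<integral>\<omega>. X \<omega> \<partial>M) = 0" "(\<integral>\<omega>. X \<omega> ^ 2 \<partial>M) = h"
    "(\<integral>\<omega>. X \<omega> ^ 3 \<partial>M) = 0" "(\<integral>\<omega>. X \<omega> ^ 4 \<partial>M) = 3 * h\<^sup>2"
proof -
  have sh: "sqrt h > 0" using h by simp
  have I: "\<And>k. (\<integral>\<omega>. X \<omega> ^ k \<partial>M) = (\<integral>x. normal_density 0 (sqrt h) x * x ^ k \<partial>lborel)"
    by (rule distributed_integral[OF D, symmetric]) auto
  show "integrable M (\<lambda>\<omega>. X \<omega> ^ k)"
    using distributed_integrable[OF D, of "\<lambda>x. x ^ k"] integrable_normal_moment[of "sqrt h" 0 k] sh by simp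
  show "(\<integral>\<omega>. X \<omega> \<partial>M) = 0"
    using I[of 1] integral_normal_moment_odd[OF sh, of 0 0] by simp
  show "(\<integral>\<omega>. X \<omega> ^ 2 \<partial>M) = h"
  proof -
    have "(\<integral>x. normal_density 0 (sqrt h) x * (x - 0) ^ (2 * 1) \<partial>lborel) = fact (2 * 1) / ((2 / (sqrt h)\<^sup>2)^1 * fact 1)"
      by (rule integral_normal_moment_even[OF sh])
    then show ?thesis using I[of 2] h by simp
  qed
  show "(\<integral>\<omega>. X \<omega> ^ 3 \<partial>M) = 0"
    using I[of 3] integral_normal_moment_odd[OF sh, where k=1 and \<mu>=0] by (simp add: numeral_3_eq_3)
  show "(\<integral>\<omega>. X \<omega> ^ 4 \<partial>M) = 3 * h\<^sup>2"
    using I[of 4] integral_normal_moment_even[OF sh, where k=2 and \<mu>=0] h by (simp add: fact_numeral power2_eq_square field_simps)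
qed


lemma (in prob_space) poly4:
  fixes X :: "'a \<Rightarrow> real"
  assumes D: "distributed M lborel X (normal_density 0 (sqrt h))" and h: "h > 0"
  shows "integrable M (\<lambda>\<omega>. c0 + c1 * X \<omega> + c2 * X \<omega> ^ 2 + c3 * X \<omega> ^ 3 + c4 * X \<omega> ^ 4)"
    "(\<integral>\<omega>. c0 + c1 * X \<omega> + c2 * X \<omega> ^ 2 + c3 * X \<omega> ^ 3 + c4 * X \<omega> ^ 4 \<partial>M) = c0 + c2 * h + 3 * c4 * h\<^sup>2"
proof -
  note m = normal_moms[OF D h]
  have i1: "integrable M X" using m(1)[of 1] by simp
  note ii = i1 m(1)[of 2] m(1)[of 3] m(1)[of 4]
  show "integrable M (\<lambda>\<omega>. c0 + c1 * X \<omega> + c2 * X \<omega> ^ 2 + c3 * X \<omega> ^ 3 + c4 * X \<omega> ^ 4)"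
    using ii by auto
  show "(\<integral>\<omega>. c0 + c1 * X \<omega> + c2 * X \<omega> ^ 2 + c3 * X \<omega> ^ 3 + c4 * X \<omega> ^ 4 \<partial>M) = c0 + c2 * h + 3 * c4 * h\<^sup>2"
    using ii m(2-5) by (simp add: prob_space)
qed

lemma (in prob_space) poly22:
  fixes X :: "'a \<Rightarrow> real"
  assumes D: "distributed M lborel X (normal_density 0 (sqrt h))" and h: "h > 0"
  shows "integrable M (\<lambda>\<omega>. (a0 + a1 * X \<omega> + a2 * X \<omega> ^ 2) * (b0 + b1 * X \<omega> + b2 * X \<omega> ^ 2))"
    "(\<integral>\<omega>. (a0 + a1 * X \<omega> + a2 * X \<omega> ^ 2) * (b0 + b1 * X \<omega> + b2 * X \<omega> ^ 2) \<partial>M)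
      = a0 * b0 + (a0 * b2 + a1 * b1 + a2 * b0) * h + 3 * a2 * b2 * h\<^sup>2"
proof -
  have e: "(\<lambda>\<omega>. (a0 + a1 * X \<omega> + a2 * X \<omega> ^ 2) * (b0 + b1 * X \<omega> + b2 * X \<omega> ^ 2))
    = (\<lambda>\<omega>. a0*b0 + (a0*b1+a1*b0) * X \<omega> + (a0 * b2 + a1 * b1 + a2 * b0) * X \<omega> ^ 2
         + (a1*b2+a2*b1) * X \<omega> ^ 3 + a2*b2 * X \<omega> ^ 4)"
    by (rule ext) (simp add: algebra_simps power2_eq_square power3_eq_cube power4_eq_xxxx)
  show "integrable M (\<lambda>\<omega>. (a0 + a1 * X \<omega> + a2 * X \<omega> ^ 2) * (b0 + b1 * X \<omega> + b2 * X \<omega> ^ 2))"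
    unfolding e by (rule poly4[OF D h])
  show "(\<integral>\<omega>. (a0 + a1 * X \<omega> + a2 * X \<omega> ^ 2) * (b0 + b1 * X \<omega> + b2 * X \<omega> ^ 2) \<partial>M)
      = a0 * b0 + (a0 * b2 + a1 * b1 + a2 * b0) * h + 3 * a2 * b2 * h\<^sup>2"
    unfolding e poly4(2)[OF D h] by (simp add: algebra_simps)
qed

lemma (in prob_space) poly2:
  fixes X :: "'a \<Rightarrow> real"
  assumes D: "distributed M lborel X (normal_density 0 (sqrt h))" and h: "h > 0"
  shows "integrable M (\<lambda>\<omega>. a0 + a1 * X \<omega> + a2 * X \<omega> ^ 2)"
    "(\<integral>\<omega>. a0 + a1 * X \<omega> + a2 * X \<omega> ^ 2 \<partial>M) = a0 + a2 * h"
  using poly22[OF D h, of a0 a1 a2 1 0 0] by simp_all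


lemma (in prob_space) step_facts:
  fixes dW :: "nat \<Rightarrow> 'a \<Rightarrow> real"
  assumes D: "distributed M lborel (dW n) (normal_density 0 (sqrt h))" and h: "h > 0"
    and ind: "indep_vars (\<lambda>_. borel) dW UNIV"
    and I1: "integrable M (milstein eta h x0 dW n)"
    and I2: "integrable M (\<lambda>\<omega>. (milstein eta h x0 dW n \<omega>)\<^sup>2)"
  shows "integrable M (milstein eta h x0 dW (Suc n))"
    "integrable M (\<lambda>\<omega>. (milstein eta h x0 dW (Suc n) \<omega>)\<^sup>2)"
    "(\<integral>\<omega>. milstein eta h x0 dW (Suc n) \<omega> \<partial>M) = (1 - h) * (\<integral>\<omega>. milstein eta h x0 dW n \<omega> \<partial>M)"
    "(\<integral>\<omega>. (milstein eta h x0 dW (Suc n) \<omega>)\<^sup>2 \<partial>M) =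
       (1 - (2 - eta\<^sup>2) * h + (1 + 1/2 * eta ^ 4) * h\<^sup>2) * (\<integral>\<omega>. (milstein eta h x0 dW n \<omega>)\<^sup>2 \<partial>M)
     + (h + 1/2 * h\<^sup>2 * eta\<^sup>2) * (1 + 2 * eta * (\<integral>\<omega>. milstein eta h x0 dW n \<omega> \<partial>M))"
proof -
  let ?x = "milstein eta h x0 dW n"
  let ?d = "dW n"
  define a0 where "a0 = -(1/2)*eta*h"
  define a2 where "a2 = 1/2*eta"
  define b0 where "b0 = 1 - h - 1/2*eta\<^sup>2*h"
  define b2 where "b2 = 1/2*eta\<^sup>2"
  define A where "A = (\<lambda>d::real. a0 + 1 * d + a2 * d ^ 2)"
  define B where "B = (\<lambda>d::real. b0 + eta * d + b2 * d ^ 2)"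
  define AA where "AA = (\<lambda>d::real. (a0 + 1 * d + a2 * d ^ 2) * (a0 + 1 * d + a2 * d ^ 2))"
  define AB where "AB = (\<lambda>d::real. (2*a0 + 2 * d + (2*a2) * d ^ 2) * (b0 + eta * d + b2 * d ^ 2))"
  define BB where "BB = (\<lambda>d::real. (b0 + eta * d + b2 * d ^ 2) * (b0 + eta * d + b2 * d ^ 2))"
  have [measurable]: "A \<in> borel_measurable borel" "B \<in> borel_measurable borel"
    "AA \<in> borel_measurable borel" "AB \<in> borel_measurable borel" "BB \<in> borel_measurable borel"
    unfolding A_def B_def AA_def AB_def BB_def by measurable
  have iA: "integrable M (\<lambda>\<omega>. A (?d \<omega>))" and eA: "(\<integral>\<omega>. A (?d \<omega>) \<partial>M) = a0 + a2 * h"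
    unfolding A_def using poly2[OF D h, of a0 1 a2] by simp_all
  have iB: "integrable M (\<lambda>\<omega>. B (?d \<omega>))" and eB: "(\<integral>\<omega>. B (?d \<omega>) \<partial>M) = b0 + b2 * h"
    unfolding B_def using poly2[OF D h] by auto
  have iAA: "integrable M (\<lambda>\<omega>. AA (?d \<omega>))" and eAA: "(\<integral>\<omega>. AA (?d \<omega>) \<partial>M) = a0 * a0 + (a0 * a2 + 1 * 1 + a2 * a0) * h + 3 * a2 * a2 * h\<^sup>2"
    unfolding AA_def using poly22[OF D h, of a0 1 a2 a0 1 a2] by simp_all
  have iAB: "integrable M (\<lambda>\<omega>. AB (?d \<omega>))" and eAB: "(\<integral>\<omega>. AB (?d \<omega>) \<partial>M) = 2*a0 * b0 + (2*a0 * b2 + 2 * eta + 2*a2 * b0) * h + 3 * (2*a2) * b2 * h\<^sup>2"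
    unfolding AB_def using poly22[OF D h, of "2*a0" 2 "2*a2" b0 eta b2] by simp_all
  have iBB: "integrable M (\<lambda>\<omega>. BB (?d \<omega>))" and eBB: "(\<integral>\<omega>. BB (?d \<omega>) \<partial>M) = b0 * b0 + (b0 * b2 + eta * eta + b2 * b0) * h + 3 * b2 * b2 * h\<^sup>2"
    unfolding BB_def using poly22[OF D h] by auto
  have x0i: "integrable M (\<lambda>\<omega>. ?x \<omega> ^ 0)" by simp
  have x1i: "integrable M (\<lambda>\<omega>. ?x \<omega> ^ 1)" using I1 by simp
  have x2i: "integrable M (\<lambda>\<omega>. ?x \<omega> ^ 2)" using I2 by simp
  note kA = key[OF ind _ x0i iA, simplified]
  note kB = key[OF ind _ x1i iB, simplified]
  note kAA = key[OF ind _ x0i iAA, simplified]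
  note kAB = key[OF ind _ x1i iAB, simplified]
  note kBB = key[OF ind _ x2i iBB, simplified]
  have e1: "milstein eta h x0 dW (Suc n) = (\<lambda>\<omega>. ?x \<omega> * B (?d \<omega>) + A (?d \<omega>))"
    by (rule ext) (simp add: Let_def A_def B_def a0_def a2_def b0_def b2_def field_simps power2_eq_square)
  have e2: "(\<lambda>\<omega>. (milstein eta h x0 dW (Suc n) \<omega>)\<^sup>2) = (\<lambda>\<omega>. (?x \<omega>)\<^sup>2 * BB (?d \<omega>) + ?x \<omega> * AB (?d \<omega>) + AA (?d \<omega>))"
    by (rule ext) (simp add: Let_def AA_def AB_def BB_def a0_def a2_def b0_def b2_def field_simps power2_eq_square)
  show "integrable M (milstein eta h x0 dW (Suc n))"
    unfolding e1 using kA kB by auto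
  show "integrable M (\<lambda>\<omega>. (milstein eta h x0 dW (Suc n) \<omega>)\<^sup>2)"
    unfolding e2 using kAA kAB kBB by auto
  show "(\<integral>\<omega>. milstein eta h x0 dW (Suc n) \<omega> \<partial>M) = (1 - h) * (\<integral>\<omega>. milstein eta h x0 dW n \<omega> \<partial>M)"
    unfolding e1 using kA kB eA eB by (simp add: prob_space a0_def a2_def b0_def b2_def algebra_simps)
  show "(\<integral>\<omega>. (milstein eta h x0 dW (Suc n) \<omega>)\<^sup>2 \<partial>M) =
       (1 - (2 - eta\<^sup>2) * h + (1 + 1/2 * eta ^ 4) * h\<^sup>2) * (\<integral>\<omega>. (milstein eta h x0 dW n \<omega>)\<^sup>2 \<partial>M)
     + (h + 1/2 * h\<^sup>2 * eta\<^sup>2) * (1 + 2 * eta * (\<integral>\<omega>. milstein eta h x0 dW n \<omega> \<partial>M))"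
    unfolding e2 using kAA kAB kBB eAA eAB eBB
    by (simp add: prob_space a0_def a2_def b0_def b2_def algebra_simps power2_eq_square power4_eq_xxxx)
qed

lemma lin_rec_lim:
  fixes e u :: "nat \<Rightarrow> real" and r :: real
  assumes r: "0 \<le> r" "r < 1" and u: "u \<longlonglongrightarrow> 0" and rec: "\<And>n. e (Suc n) = r * e n + u n"
  shows "e \<longlonglongrightarrow> 0"
proof (rule LIMSEQ_I)
  fix \<epsilon> :: real assume ep: "0 < \<epsilon>"
  have "0 < \<epsilon> * (1 - r) / 2" using ep r by simp
  from LIMSEQ_D[OF u this] obtain N where N: "\<And>n. n \<ge> N \<Longrightarrow> \<bar>u n\<bar> < \<epsilon> * (1 - r) / 2" by auto
  have cl: "\<bar>e (N + k)\<bar> \<le> r ^ k * \<bar>e N\<bar> + \<epsilon> / 2" for k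
  proof (induction k)
    case 0 then show ?case using ep by simp
  next
    case (Suc k)
    have "\<bar>e (N + Suc k)\<bar> \<le> r * \<bar>e (N + k)\<bar> + \<bar>u (N + k)\<bar>"
      using rec[of "N + k"] r by (simp add: abs_mult) (metis abs_mult abs_of_nonneg abs_triangle_ineq)
    also have "\<dots> \<le> r * (r ^ k * \<bar>e N\<bar> + \<epsilon> / 2) + \<epsilon> * (1 - r) / 2"
      using Suc.IH N[of "N + k"] r by (intro add_mono mult_left_mono) auto
    also have "\<dots> = r ^ Suc k * \<bar>e N\<bar> + \<epsilon> / 2" by (simp add: field_simps)
    finally show ?case .
  qed
  have "(\<lambda>k. r ^ k * \<bar>e N\<bar>) \<longlonglongrightarrow> 0"
    using r by (intro tendsto_mult_left_zero LIMSEQ_realpow_zero) auto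
  from LIMSEQ_D[OF this, of "\<epsilon>/2"] ep obtain K where K: "\<And>k. k \<ge> K \<Longrightarrow> \<bar>r ^ k * \<bar>e N\<bar>\<bar> < \<epsilon> / 2" by auto
  show "\<exists>no. \<forall>n\<ge>no. norm (e n - 0) < \<epsilon>"
  proof (intro exI allI impI)
    fix n assume "N + K \<le> n"
    then obtain j where "n = N + K + j" using le_iff_add by blast
    then obtain k where k: "n = N + k" "k \<ge> K" by (intro that[of "K + j"]) auto
    have "r ^ k * \<bar>e N\<bar> < \<epsilon> / 2" using K[OF k(2)] by simp
    then show "norm (e n - 0) < \<epsilon>" using cl[of k] k by simp
  qed
qed

lemma geo_lim_iff:
  fixes h :: real assumes h: "h > 0"
  shows "(\<forall>y0::real. (\<lambda>n. (1 - h) ^ n * y0) \<longlonglongrightarrow> 0) \<longleftrightarrow> (0 < h \<and> h < 2)"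
proof
  assume a: "\<forall>y0::real. (\<lambda>n. (1 - h) ^ n * y0) \<longlonglongrightarrow> 0"
  show "0 < h \<and> h < 2"
  proof (rule ccontr)
    assume "\<not> (0 < h \<and> h < 2)"
    then have ge: "\<bar>1 - h\<bar> \<ge> 1" using h by auto
    from a have "(\<lambda>n. (1 - h) ^ n * 1) \<longlonglongrightarrow> 0" by blast
    from LIMSEQ_D[OF this, of 1] obtain n where "\<bar>(1 - h) ^ n\<bar> < 1" by auto
    moreover have "\<bar>(1 - h) ^ n\<bar> \<ge> 1" using ge by (simp add: power_abs one_le_power)
    ultimately show False by simp
  qed
next
  assume "0 < h \<and> h < 2"
  then have "norm (1 - h) < 1" by auto
  then show "\<forall>y0::real. (\<lambda>n. (1 - h) ^ n * y0) \<longlonglongrightarrow> 0"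
    by (auto intro!: tendsto_mult_left_zero LIMSEQ_power_zero)
qed

lemma bigo_part:
  fixes eta :: real assumes s: "eta\<^sup>2 < 2"
  shows "(\<lambda>k. (1 + 1/2 * k * eta\<^sup>2) / (2 - eta\<^sup>2 - k * (1 + 1/2 * eta ^ 4)) - 1 / (2 - eta\<^sup>2))
           \<in> O[at 0](\<lambda>k. k)"
proof -
  define a where "a = 2 - eta\<^sup>2"
  have a: "a > 0" using s by (simp add: a_def)
  have "((\<lambda>k::real. 2 - eta\<^sup>2 - k * (1 + 1/2 * eta ^ 4)) \<longlongrightarrow> 2 - eta\<^sup>2 - 0 * (1 + 1/2 * eta ^ 4)) (at 0)"
    by (intro tendsto_intros)
  then have "((\<lambda>k::real. 2 - eta\<^sup>2 - k * (1 + 1/2 * eta ^ 4)) \<longlongrightarrow> a) (at 0)" by (simp add: a_def)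
  from order_tendstoD(1)[OF this, of "a/2"] a
  have ev: "eventually (\<lambda>k::real. 2 - eta\<^sup>2 - k * (1 + 1/2 * eta ^ 4) > a / 2) (at 0)" by simp
  show ?thesis
  proof (rule bigoI[where c = "2 * (1 + eta\<^sup>2) / a\<^sup>2"], rule eventually_mono[OF ev])
    fix k :: real
    define D where "D = 2 - eta\<^sup>2 - k * (1 + 1/2 * eta ^ 4)"
    assume "a / 2 < 2 - eta\<^sup>2 - k * (1 + 1/2 * eta ^ 4)"
    then have Dp: "D > a / 2" by (simp add: D_def)
    then have Dpos: "D > 0" using a by simp
    have eq: "(1 + 1/2 * k * eta\<^sup>2) / D - 1 / a = k * (1 + eta\<^sup>2) / (D * a)"
    proof -
      have num: "(1 + 1/2 * k * eta\<^sup>2) * a - D = k * (1 + eta\<^sup>2)"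
        unfolding D_def a_def by (simp add: field_simps power4_eq_xxxx power2_eq_square)
      have "(1 + 1/2 * k * eta\<^sup>2) / D - 1 / a = ((1 + 1/2 * k * eta\<^sup>2) * a - D) / (D * a)"
        using Dpos a by (simp add: field_simps)
      then show ?thesis using num by simp
    qed
    have "\<bar>k * (1 + eta\<^sup>2) / (D * a)\<bar> = \<bar>k\<bar> * (1 + eta\<^sup>2) / (D * a)"
      using Dpos a by (simp add: abs_mult abs_divide)
    also have "\<dots> \<le> \<bar>k\<bar> * (1 + eta\<^sup>2) / (a / 2 * a)"
      using Dpos a Dp by (intro divide_left_mono mult_right_mono mult_pos_pos) auto
    also have "\<dots> = 2 * (1 + eta\<^sup>2) / a\<^sup>2 * \<bar>k\<bar>"
      using a by (simp add: field_simps power2_eq_square)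
    finally show "norm ((1 + 1/2 * k * eta\<^sup>2) / (2 - eta\<^sup>2 - k * (1 + 1/2 * eta ^ 4)) - 1 / (2 - eta\<^sup>2))
        \<le> 2 * (1 + eta\<^sup>2) / a\<^sup>2 * norm k"
      using eq by (simp add: D_def a_def)
  qed
qed

theorem mainTheorem5:
  fixes M :: "'a measure" and eta h x0 :: real and dW :: "nat \<Rightarrow> 'a \<Rightarrow> real"
  assumes "prob_space M"
    and "h > 0"
    and "\<And>n. distributed M lborel (dW n) (normal_density 0 (sqrt h))"
    and "prob_space.indep_vars M (\<lambda>_. borel) dW UNIV"
  defines "mu1 \<equiv> (\<lambda>n. integral\<^sup>L M (milstein eta h x0 dW n))"
    and "mu2 \<equiv> (\<lambda>n. integral\<^sup>L M (\<lambda>\<omega>. (milstein eta h x0 dW n \<omega>)\<^sup>2))"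
  shows "(\<forall>n. mu1 (Suc n) = (1 - h) * mu1 n)
    \<and> ((\<forall>y0. (\<lambda>n. integral\<^sup>L M (milstein eta h y0 dW n)) \<longlonglongrightarrow> 0) \<longleftrightarrow> (0 < h \<and> h < 2))
    \<and> (\<forall>n. mu2 (Suc n) = (1 - (2 - eta\<^sup>2) * h + (1 + 1/2 * eta ^ 4) * h\<^sup>2) * mu2 n
                         + (h + 1/2 * h\<^sup>2 * eta\<^sup>2) * (1 + 2 * eta * mu1 n))
    \<and> (0 < h \<and> h < (2 - eta\<^sup>2) / (1 + 1/2 * eta ^ 4) \<longrightarrow>
         mu2 \<longlonglongrightarrow> (1 + 1/2 * h * eta\<^sup>2) / (2 - eta\<^sup>2 - h * (1 + 1/2 * eta ^ 4)))
    \<and> (eta\<^sup>2 < 2 \<longrightarrow>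
         (\<lambda>k. (1 + 1/2 * k * eta\<^sup>2) / (2 - eta\<^sup>2 - k * (1 + 1/2 * eta ^ 4)) - 1 / (2 - eta\<^sup>2))
           \<in> O[at 0](\<lambda>k. k))"
proof -
  interpret prob_space M by fact
  note D = assms(3) and h = assms(2) and ind = assms(4)
  have ints: "integrable M (milstein eta h y0 dW n) \<and> integrable M (\<lambda>\<omega>. (milstein eta h y0 dW n \<omega>)\<^sup>2)" for y0 n
  proof (induction n)
    case 0 then show ?case by simp
  next
    case (Suc n) then show ?case using step_facts(1,2)[OF D h ind] by blast
  qed
  have m1rec: "(\<integral>\<omega>. milstein eta h y0 dW (Suc n) \<omega> \<partial>M) = (1 - h) * (\<integral>\<omega>. milstein eta h y0 dW n \<omega> \<partial>M)" for y0 n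
    using step_facts(3)[OF D h ind] ints by blast
  have m2rec: "(\<integral>\<omega>. (milstein eta h x0 dW (Suc n) \<omega>)\<^sup>2 \<partial>M) =
       (1 - (2 - eta\<^sup>2) * h + (1 + 1/2 * eta ^ 4) * h\<^sup>2) * (\<integral>\<omega>. (milstein eta h x0 dW n \<omega>)\<^sup>2 \<partial>M)
     + (h + 1/2 * h\<^sup>2 * eta\<^sup>2) * (1 + 2 * eta * (\<integral>\<omega>. milstein eta h x0 dW n \<omega> \<partial>M))" for n
    using step_facts(4)[OF D h ind] ints by blast
  have closed: "(\<integral>\<omega>. milstein eta h y0 dW n \<omega> \<partial>M) = (1 - h) ^ n * y0" for y0 n
  proof (induction n)
    case 0 then show ?case by (simp add: prob_space)
  next
    case (Suc n) then show ?case using m1rec[of y0 n] by simp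
  qed
  have c1: "\<forall>n. mu1 (Suc n) = (1 - h) * mu1 n" unfolding mu1_def using m1rec by blast
  have c2: "(\<forall>y0. (\<lambda>n. integral\<^sup>L M (milstein eta h y0 dW n)) \<longlonglongrightarrow> 0) \<longleftrightarrow> (0 < h \<and> h < 2)"
    unfolding closed using geo_lim_iff[OF h] .
  have c3: "\<forall>n. mu2 (Suc n) = (1 - (2 - eta\<^sup>2) * h + (1 + 1/2 * eta ^ 4) * h\<^sup>2) * mu2 n
                         + (h + 1/2 * h\<^sup>2 * eta\<^sup>2) * (1 + 2 * eta * mu1 n)"
    unfolding mu1_def mu2_def using m2rec by blast
  have c4: "mu2 \<longlonglongrightarrow> (1 + 1/2 * h * eta\<^sup>2) / (2 - eta\<^sup>2 - h * (1 + 1/2 * eta ^ 4))"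
    if hb: "h < (2 - eta\<^sup>2) / (1 + 1/2 * eta ^ 4)"
  proof -
    define q where "q = 2 - eta\<^sup>2 - h * (1 + 1/2 * eta ^ 4)"
    define \<rho> where "\<rho> = 1 - (2 - eta\<^sup>2) * h + (1 + 1/2 * eta ^ 4) * h\<^sup>2"
    define c where "c = h + 1/2 * h\<^sup>2 * eta\<^sup>2"
    define L where "L = (1 + 1/2 * h * eta\<^sup>2) / q"
    have pos4: "1 + 1/2 * eta ^ 4 > 0" by (simp add: add_pos_nonneg)
    have hq: "h * (1 + 1/2 * eta ^ 4) < 2 - eta\<^sup>2" using hb pos4 by (simp add: pos_less_divide_eq mult.commute)
    have qpos: "q > 0" using hq by (simp add: q_def)
    have "h \<le> h * (1 + 1/2 * eta ^ 4)" using h by (simp add: zero_le_even_power)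
    then have h2: "h < 2" using hq by (smt (verit) zero_le_power2)
    have rho_eq: "\<rho> = 1 - h * q" by (simp add: \<rho>_def q_def algebra_simps power2_eq_square)
    have rho_lt: "\<rho> < 1" using rho_eq h qpos by simp
    have rho_eq2: "\<rho> = (1 - h)\<^sup>2 + eta\<^sup>2 * h + 1/2 * eta ^ 4 * h\<^sup>2"
      by (simp add: \<rho>_def algebra_simps power2_eq_square)
    have rho_nn: "\<rho> \<ge> 0" unfolding rho_eq2 using h by (intro add_nonneg_nonneg) (auto simp: zero_le_even_power)
    have cL: "c = (1 - \<rho>) * L"
      using qpos by (simp add: rho_eq L_def c_def field_simps power2_eq_square)
    have mu1_lim: "mu1 \<longlonglongrightarrow> 0"
      using c2 h h2 unfolding mu1_def by blast
    have "(\<lambda>n. mu2 n - L) \<longlonglongrightarrow> 0"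
    proof (rule lin_rec_lim[OF rho_nn rho_lt])
      show "(\<lambda>n. 2 * c * eta * mu1 n) \<longlonglongrightarrow> 0"
        using mu1_lim by (intro tendsto_mult_right_zero)
      fix n
      show "mu2 (Suc n) - L = \<rho> * (mu2 n - L) + 2 * c * eta * mu1 n"
      proof -
        have "mu2 (Suc n) = \<rho> * mu2 n + c * (1 + 2 * eta * mu1 n)"
          using c3 by (simp add: \<rho>_def c_def)
        then show ?thesis unfolding cL by (simp add: algebra_simps)
      qed
    qed
    then show ?thesis unfolding LIM_zero_iff L_def q_def .
  qed
  show ?thesis using c1 c2 c3 c4 bigo_part by blast
qed

end
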